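(* Let $0<\beta<1$, $p=\lceil\beta^{-1}\rceil-1$, and let $G$ be a graph of order $n$ with minimum degree $(1-\beta)n$. Then for all integers $2\le t<s\le p+1$ and every $S\in\mathcal{K}_s$, $$\Phi_t^s(S)\ \ge\ (1-t\beta)\frac{s!}{t!}+\big(D_-(S)-(1-s\beta)\big)\frac{(s-2)!}{(t-2)!}.$$ In particular, for $2\le t\le p$, $$\sum_{S\in\mathcal{K}_{p+1}}\Phi_t^{p+1}(S)\ \ge\ \left((1-t\beta)\frac{(p+1)!}{t!}-(1-(p+1)\beta)\frac{(p-1)!}{(t-2)!}\right)k_{p+1}.$$
   Context: All graphs are finite and simple. For a graph $G$, $\mathcal{K}_t$ is the set of $t$-cliques (identified with vertex sets), $k_t=|\mathcal{K}_t|$, and $\mathcal{K}_t(S)$ is the set of $t$-cliques contained in a clique $S$. The degree $d(T)$ of a clique $T$ is the number of cliques with one more vertex containing $T$, and $D(T)=d(T)/n$. With $p=\lceil\beta^{-1}\rceil-1$, for $T\in\mathcal{K}_t$, $1\le t\le p+1$, $D_-(T)=\min\{D(T),(p-t+1)\beta\}$. For integers $2\le t\le s\le p+1$ define $\phi_t^s:\mathcal{K}_s\to\mathbb{R}$ recursively by $\phi_t^t(S)=D_-(S)$ and $\phi_t^s(S)=\sum_{U\in\mathcal{K}_{s-1}(S)}\phi_t^{s-1}(U)$ for $s>t$; set $\varphi_t^s=(1-t\beta)\frac{s!}{t!}+((p+1)\beta-1)\frac{(s-2)!}{(t-2)!}$ and $\Phi_t^s(S)=\min\{\phi_t^s(S),\varphi_t^s\}$.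 *)

theory Defs
  imports Main "HOL-Library.Discrete_Functions" Complex_Main
begin

definition simple_graph :: "'a set \<Rightarrow> ('a \<Rightarrow> 'a \<Rightarrow> bool) \<Rightarrow> bool" where
  "simple_graph V E \<longleftrightarrow> finite V \<and> (\<forall>u v. E u v \<longrightarrow> u \<in> V \<and> v \<in> V)
      \<and> (\<forall>u v. E u v \<longrightarrow> E v u) \<and> (\<forall>v. \<not> E v v)"

definition vdeg :: "'a set \<Rightarrow> ('a \<Rightarrow> 'a \<Rightarrow> bool) \<Rightarrow> 'a \<Rightarrow> nat" where
  "vdeg V E v = card {u \<in> V. E v u}"

definition min_degree :: "'a set \<Rightarrow> ('a \<Rightarrow> 'a \<Rightarrow> bool) \<Rightarrow> nat" where
  "min_degree V E = Min (vdeg V E ` V)"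

definition is_clique :: "'a set \<Rightarrow> ('a \<Rightarrow> 'a \<Rightarrow> bool) \<Rightarrow> 'a set \<Rightarrow> bool" where
  "is_clique V E S \<longleftrightarrow> S \<subseteq> V \<and> (\<forall>u\<in>S. \<forall>v\<in>S. u \<noteq> v \<longrightarrow> E u v)"

definition cliques :: "'a set \<Rightarrow> ('a \<Rightarrow> 'a \<Rightarrow> bool) \<Rightarrow> nat \<Rightarrow> 'a set set" where
  "cliques V E t = {S. is_clique V E S \<and> finite S \<and> card S = t}"

definition cliques_in :: "'a set \<Rightarrow> ('a \<Rightarrow> 'a \<Rightarrow> bool) \<Rightarrow> nat \<Rightarrow> 'a set \<Rightarrow> 'a set set" where
  "cliques_in V E t S = {U \<in> cliques V E t. U \<subseteq> S}"

definition cdeg :: "'a set \<Rightarrow> ('a \<Rightarrow> 'a \<Rightarrow> bool) \<Rightarrow> 'a set \<Rightarrow> nat" where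
  "cdeg V E T = card {U \<in> cliques V E (card T + 1). T \<subseteq> U}"

definition cD :: "'a set \<Rightarrow> ('a \<Rightarrow> 'a \<Rightarrow> bool) \<Rightarrow> 'a set \<Rightarrow> real" where
  "cD V E T = real (cdeg V E T) / real (card V)"

definition pp :: "real \<Rightarrow> nat" where
  "pp \<beta> = nat (\<lceil>1 / \<beta>\<rceil> - 1)"

definition Dminus :: "'a set \<Rightarrow> ('a \<Rightarrow> 'a \<Rightarrow> bool) \<Rightarrow> real \<Rightarrow> 'a set \<Rightarrow> real" where
  "Dminus V E \<beta> T = min (cD V E T) ((real (pp \<beta>) - real (card T) + 1) * \<beta>)"

text \<open>phi_aux k S = phi_t^{t+k}(S) for S a (t+k)-clique.\<close>
fun phi_aux :: "'a set \<Rightarrow> ('a \<Rightarrow> 'a \<Rightarrow> bool) \<Rightarrow> real \<Rightarrow> nat \<Rightarrow> nat \<Rightarrow> 'a set \<Rightarrow> real" where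
  "phi_aux V E \<beta> t 0 S = Dminus V E \<beta> S"
| "phi_aux V E \<beta> t (Suc k) S =
     (\<Sum>U\<in>cliques_in V E (t + k) S. phi_aux V E \<beta> t k U)"

definition phi :: "'a set \<Rightarrow> ('a \<Rightarrow> 'a \<Rightarrow> bool) \<Rightarrow> real \<Rightarrow> nat \<Rightarrow> nat \<Rightarrow> 'a set \<Rightarrow> real" where
  "phi V E \<beta> t s S = phi_aux V E \<beta> t (s - t) S"

definition varphi :: "real \<Rightarrow> nat \<Rightarrow> nat \<Rightarrow> real" where
  "varphi \<beta> t s = (1 - real t * \<beta>) * (fact s / fact t)
      + ((real (pp \<beta>) + 1) * \<beta> - 1) * (fact (s - 2) / fact (t - 2))"

definition Phi :: "'a set \<Rightarrow> ('a \<Rightarrow> 'a \<Rightarrow> bool) \<Rightarrow> real \<Rightarrow> nat \<Rightarrow> nat \<Rightarrow> 'a set \<Rightarrow> real" where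
  "Phi V E \<beta> t s S = min (phi V E \<beta> t s S) (varphi \<beta> t s)"

end

theory Submission
  imports Defs
begin


lemma key_abstract:
  fixes S :: "'b set" and x :: "'b \<Rightarrow> real"
  assumes fin: "finite S" and cS: "card S = m" and cge: "c \<ge> 1 - real m * \<beta>"
    and H: "\<And>K. K \<subseteq> S \<Longrightarrow> (\<Sum>v\<in>S-K. x v) \<ge> 2 + (real (card (S-K)) - 2) * D - (real m + real (card K)) * \<beta>"
    and L: "\<And>u. u \<in> S \<Longrightarrow> x u \<ge> 1 - (real m - 1) * \<beta>"
  shows "(\<Sum>v\<in>S. min (x v) (c + \<beta>)) \<ge> (real m - 2) * min D c + 2 - real m * \<beta>"
proof -
  define K where "K = {v\<in>S. c + \<beta> < x v}"
  have KS: "K \<subseteq> S" by (auto simp: K_def)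
  have finK: "finite K" using fin KS finite_subset by blast
  define k where "k = card K"
  have km: "k \<le> m" using card_mono[OF fin KS] cS k_def by simp
  have cSK: "real (card (S - K)) = real m - real k"
    using card_Diff_subset[OF finK KS] km cS k_def by simp
  have split: "(\<Sum>v\<in>S. min (x v) (c + \<beta>)) = (\<Sum>v\<in>S-K. x v) + real k * (c + \<beta>)"
  proof -
    have "(\<Sum>v\<in>S. min (x v) (c + \<beta>)) = (\<Sum>v\<in>S-K. min (x v) (c + \<beta>)) + (\<Sum>v\<in>K. min (x v) (c + \<beta>))"
      by (rule sum.subset_diff[OF KS fin])
    also have "(\<Sum>v\<in>S-K. min (x v) (c + \<beta>)) = (\<Sum>v\<in>S-K. x v)"
      by (intro sum.cong) (auto simp: K_def)
    also have "(\<Sum>v\<in>K. min (x v) (c + \<beta>)) = (\<Sum>v\<in>K. c + \<beta>)"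
      by (intro sum.cong) (auto simp: K_def)
    finally show ?thesis by (simp add: k_def)
  qed
  have HK: "(\<Sum>v\<in>S-K. x v) \<ge> 2 + (real m - real k - 2) * D - (real m + real k) * \<beta>"
    using H[OF KS] cSK k_def by simp
  have LK: "(\<Sum>v\<in>S-K. x v) \<ge> (real m - real k) * (1 - (real m - 1) * \<beta>)"
  proof -
    have "(\<Sum>v\<in>S-K. x v) \<ge> (\<Sum>v\<in>S-K. 1 - (real m - 1) * \<beta>)"
      by (intro sum_mono L) auto
    thus ?thesis using cSK by simp
  qed
  show ?thesis
  proof (cases "D \<le> c")
    case True
    hence "min D c = D" by simp
    moreover have "real k * (c - D) \<ge> 0" using True by simp
    ultimately show ?thesis using split HK by (simp add: algebra_simps)
  next
    case False
    hence mc: "min D c = c" by simp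
    consider "k + 2 \<le> m" | "k = m - 1" "m \<ge> 1" | "k = m" using km by linarith
    then show ?thesis
    proof cases
      case 1
      hence "(real m - real k - 2) * (D - c) \<ge> 0" using False by simp
      thus ?thesis using split HK mc by (simp add: algebra_simps)
    next
      case 2
      hence "real m - real k = 1" by simp
      thus ?thesis using split LK mc cge 2 by (simp add: algebra_simps of_nat_diff)
    next
      case 3
      thus ?thesis using split mc cge LK by (simp add: algebra_simps)
    qed
  qed
qed




locale cg =
  fixes V :: "'a set" and E :: "'a \<Rightarrow> 'a \<Rightarrow> bool" and \<beta> :: real
  assumes graph: "simple_graph V E"
    and nonempty: "V \<noteq> {}"
    and beta: "0 < \<beta>" "\<beta> < 1"
    and mindeg: "real (min_degree V E) = (1 - \<beta>) * real (card V)"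
begin

definition NN :: "'a set \<Rightarrow> 'a set" where
  "NN T = {w\<in>V. w \<notin> T \<and> (\<forall>u\<in>T. E u w)}"

definition nn :: "'a \<Rightarrow> 'a set" where
  "nn v = {w\<in>V. w \<noteq> v \<and> \<not> E v w}"

lemma finV: "finite V" using graph by (simp add: simple_graph_def)
lemma symE: "E u v \<Longrightarrow> E v u" using graph by (simp add: simple_graph_def)
lemma irrE: "\<not> E v v" using graph by (simp add: simple_graph_def)
lemma npos: "real (card V) > 0" using finV nonempty by (simp add: card_gt_0_iff)

lemma nn_bound: assumes "v \<in> V" shows "real (card (nn v)) \<le> \<beta> * real (card V) - 1"
proof -
  let ?nb = "{u\<in>V. E v u}"
  have V: "V = insert v (nn v \<union> ?nb)" using assms by (auto simp: nn_def)
  have "card V = Suc (card (nn v) + card ?nb)"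
    apply (subst V)
    apply (subst card_insert_disjoint)
      apply (use finV in \<open>auto simp: nn_def irrE\<close>)[2]
    apply (subst card_Un_disjoint)
       apply (use finV in \<open>auto simp: nn_def\<close>)
    done
  moreover have "min_degree V E \<le> card ?nb"
    unfolding min_degree_def vdeg_def using finV assms by (intro Min_le) auto
  ultimately show ?thesis using mindeg by (simp add: algebra_simps)
qed

lemma cdeg_eq: assumes "is_clique V E T" "finite T" shows "cdeg V E T = card (NN T)"
proof -
  have eq: "{U \<in> cliques V E (card T + 1). T \<subseteq> U} = (\<lambda>w. insert w T) ` NN T"
  proof (intro set_eqI iffI)
    fix U assume U: "U \<in> {U \<in> cliques V E (card T + 1). T \<subseteq> U}"
    hence cl: "is_clique V E U" "finite U" "card U = card T + 1" "T \<subseteq> U"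
      by (auto simp: cliques_def)
    hence "card (U - T) = 1" using assms by (simp add: card_Diff_subset)
    then obtain w where w: "U - T = {w}" by (auto simp: card_Suc_eq)
    hence Ueq: "U = insert w T" using cl by auto
    have wU: "w \<in> U" "w \<notin> T" using w by auto
    have "w \<in> NN T" unfolding NN_def using cl wU
      by (auto simp: is_clique_def)
    thus "U \<in> (\<lambda>w. insert w T) ` NN T" using Ueq by auto
  next
    fix U assume "U \<in> (\<lambda>w. insert w T) ` NN T"
    then obtain w where w: "w \<in> NN T" "U = insert w T" by auto
    thus "U \<in> {U \<in> cliques V E (card T + 1). T \<subseteq> U}"
      using assms by (auto simp: cliques_def NN_def is_clique_def intro: symE)
  qed
  have "inj_on (\<lambda>w. insert w T) (NN T)"
    by (auto simp: inj_on_def NN_def)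
  thus ?thesis unfolding cdeg_def eq by (simp add: card_image)
qed

lemma NN_lower: assumes "is_clique V E T" "finite T"
  shows "real (card (NN T)) \<ge> real (card V) - real (card T) * \<beta> * real (card V)"
proof -
  have TV: "T \<subseteq> V" using assms by (simp add: is_clique_def)
  have "V \<subseteq> NN T \<union> T \<union> (\<Union>u\<in>T. nn u)"
    by (auto simp: NN_def nn_def)
  hence "card V \<le> card (NN T \<union> T \<union> (\<Union>u\<in>T. nn u))"
    using finV assms by (intro card_mono) (auto simp: NN_def nn_def)
  also have "\<dots> \<le> card (NN T) + card T + card (\<Union>u\<in>T. nn u)"
    by (meson card_Un_le add_le_mono order_trans order_refl)
  also have "card (\<Union>u\<in>T. nn u) \<le> (\<Sum>u\<in>T. card (nn u))"
    by (rule card_UN_le) (rule assms)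
  finally have "real (card V) \<le> real (card (NN T)) + real (card T) + (\<Sum>u\<in>T. real (card (nn u)))"
    by (simp add: of_nat_sum[symmetric] del: of_nat_sum)
  also have "(\<Sum>u\<in>T. real (card (nn u))) \<le> (\<Sum>u\<in>T. \<beta> * real (card V) - 1)"
    using TV by (intro sum_mono nn_bound) auto
  finally show ?thesis by (simp add: algebra_simps)
qed


lemma card_swap:
  assumes "finite A" "finite B"
  shows "(\<Sum>v\<in>A. card {w\<in>B. P v w}) = (\<Sum>w\<in>B. card {v\<in>A. P v w})"
proof -
  have "(\<Sum>v\<in>A. card {w\<in>B. P v w}) = (\<Sum>v\<in>A. \<Sum>w\<in>B. of_bool (P v w))"
    using assms by (simp add: Int_def)
  also have "\<dots> = (\<Sum>w\<in>B. \<Sum>v\<in>A. of_bool (P v w))" by (rule sum.swap)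
  also have "\<dots> = (\<Sum>w\<in>B. card {v\<in>A. P v w})"
    using assms by (simp add: Int_def)
  finally show ?thesis .
qed

lemma card_ge1: "finite A \<Longrightarrow> x \<in> A \<Longrightarrow> 1 \<le> card A"
  by (auto simp: Suc_le_eq card_gt_0_iff)

lemma perw:
  assumes S: "is_clique V E S" "finite S" and K: "K \<subseteq> S" and w: "w \<in> V"
  shows "card {v\<in>S-K. w \<in> NN (S-{v})} + card {v\<in>S. w \<in> nn v} + card {v\<in>K. w \<in> nn v}
     \<ge> of_bool (w \<in> S-K) + card (S-K) * of_bool (w \<in> NN S) + 2 * of_bool (w \<in> V - (S \<union> NN S))"
proof -
  have finK: "finite K" using K S finite_subset by blast
  consider (inS) "w \<in> S" | (inN) "w \<notin> S" "w \<in> NN S" | (out) "w \<notin> S" "w \<notin> NN S" by blast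
  then show ?thesis
  proof cases
    case inS
    have nN: "w \<notin> NN S" using inS by (auto simp: NN_def)
    show ?thesis
    proof (cases "w \<in> S - K")
      case True
      have "w \<in> NN (S - {w})" using S w True by (auto simp: NN_def is_clique_def)
      hence "{w} \<subseteq> {v\<in>S-K. w \<in> NN (S-{v})}" using True by auto
      hence "1 \<le> card {v\<in>S-K. w \<in> NN (S-{v})}"
        using S by (intro card_ge1[of _ w]) auto
      thus ?thesis using nN inS by simp
    next
      case False thus ?thesis using nN inS by simp
    qed
  next
    case inN
    have "{v\<in>S-K. w \<in> NN (S-{v})} = S - K" using inN by (auto simp: NN_def)
    thus ?thesis using inN by simp
  next
    case out
    then obtain u where u: "u \<in> S" "\<not> E u w" using w by (auto simp: NN_def)
    have wu: "w \<noteq> u" using u out by auto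
    have unn: "w \<in> nn u" using u wu w by (auto simp: nn_def)
    have c1: "1 \<le> card {v\<in>S. w \<in> nn v}"
      using S u unn by (intro card_ge1[of _ u]) auto
    show ?thesis
    proof (cases "\<exists>u'\<in>S. u' \<noteq> u \<and> \<not> E u' w")
      case True
      then obtain u' where u': "u' \<in> S" "u' \<noteq> u" "\<not> E u' w" by auto
      have "w \<in> nn u'" using u' out w by (auto simp: nn_def)
      hence "{u, u'} \<subseteq> {v\<in>S. w \<in> nn v}" using unn u u' by auto
      hence "card {u, u'} \<le> card {v\<in>S. w \<in> nn v}" using S by (intro card_mono) auto
      hence "2 \<le> card {v\<in>S. w \<in> nn v}" using u' by simp
      thus ?thesis using out w by simp
    next
      case False
      show ?thesis
      proof (cases "u \<in> K")
        case True
        hence "1 \<le> card {v\<in>K. w \<in> nn v}"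
          using finK unn True by (intro card_ge1[of _ u]) auto
        thus ?thesis using c1 out w by simp
      next
        case uK: False
        have "w \<in> NN (S - {u})" using False out w by (auto simp: NN_def)
        hence "1 \<le> card {v\<in>S-K. w \<in> NN (S-{v})}"
          using S u uK by (intro card_ge1[of _ u]) auto
        thus ?thesis using c1 out w by simp
      qed
    qed
  qed
qed


lemma NN_sub: "NN T \<subseteq> V" by (auto simp: NN_def)
lemma nn_sub: "nn v \<subseteq> V" by (auto simp: nn_def)

lemma count:
  assumes S: "is_clique V E S" "finite S" and K: "K \<subseteq> S"
  shows "(\<Sum>v\<in>S-K. card (NN (S-{v}))) + (\<Sum>v\<in>S. card (nn v)) + (\<Sum>v\<in>K. card (nn v))
     \<ge> 2 * card (V - (S \<union> NN S)) + card (S-K) * (card (NN S) + 1)"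
proof -
  have SV: "S \<subseteq> V" using S by (simp add: is_clique_def)
  have finK: "finite K" using K S finite_subset by blast
  have e1: "(\<Sum>v\<in>S-K. card (NN (S-{v}))) = (\<Sum>w\<in>V. card {v\<in>S-K. w \<in> NN (S-{v})})"
  proof -
    have "(\<Sum>v\<in>S-K. card (NN (S-{v}))) = (\<Sum>v\<in>S-K. card {w\<in>V. w \<in> NN (S-{v})})"
      using NN_sub by (intro sum.cong) (auto intro!: arg_cong[where f=card])
    also have "\<dots> = (\<Sum>w\<in>V. card {v\<in>S-K. w \<in> NN (S-{v})})" using S finV by (intro card_swap) auto
    finally show ?thesis .
  qed
  have e2: "(\<Sum>v\<in>A. card (nn v)) = (\<Sum>w\<in>V. card {v\<in>A. w \<in> nn v})" if "finite A" for A
  proof -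
    have "(\<Sum>v\<in>A. card (nn v)) = (\<Sum>v\<in>A. card {w\<in>V. w \<in> nn v})"
      using nn_sub by (intro sum.cong) (auto intro!: arg_cong[where f=card])
    also have "\<dots> = (\<Sum>w\<in>V. card {v\<in>A. w \<in> nn v})" using that finV by (intro card_swap) auto
    finally show ?thesis .
  qed
  have "(\<Sum>w\<in>V. of_bool (w \<in> S-K) + card (S-K) * of_bool (w \<in> NN S) + 2 * of_bool (w \<in> V - (S \<union> NN S)))
     \<le> (\<Sum>w\<in>V. card {v\<in>S-K. w \<in> NN (S-{v})} + card {v\<in>S. w \<in> nn v} + card {v\<in>K. w \<in> nn v})"
    by (intro sum_mono perw[OF S K]) auto
  also have "\<dots> = (\<Sum>v\<in>S-K. card (NN (S-{v}))) + (\<Sum>v\<in>S. card (nn v)) + (\<Sum>v\<in>K. card (nn v))"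
    using e1 e2[OF S(2)] e2[OF finK] by (simp add: sum.distrib)
  also have "(\<Sum>w\<in>V. of_bool (w \<in> S-K) + card (S-K) * of_bool (w \<in> NN S) + 2 * of_bool (w \<in> V - (S \<union> NN S)))
      = card (S-K) + card (S-K) * card (NN S) + 2 * card (V - (S \<union> NN S))"
  proof -
    have a: "V \<inter> {w. w \<in> S-K} = S - K" using SV by auto
    have b: "V \<inter> {w. w \<in> NN S} = NN S" using NN_sub by auto
    have c: "V \<inter> {w. w \<in> V - (S \<union> NN S)} = V - (S \<union> NN S)" by auto
    have a': "V \<inter> {w\<in>S. w \<notin> K} = S - K" using SV by auto
    have b': "V \<inter> NN S = NN S" using NN_sub by auto
    have c': "V \<inter> {w. w \<notin> S \<and> w \<notin> NN S} = V - (S \<union> NN S)" by auto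
    show ?thesis using finV
      by (simp add: sum.distrib sum_distrib_left[symmetric] a b c del: sum_of_bool_eq)
         (simp add: a' b' c')
  qed
  finally show ?thesis by (simp add: algebra_simps)
qed

end



lemma pp_ge: assumes "0 < \<beta>" shows "(real (pp \<beta>) + 1) * \<beta> \<ge> 1"
proof -
  have "1 / \<beta> > 0" using assms by simp
  hence "0 < real_of_int \<lceil>1/\<beta>\<rceil>" using le_of_int_ceiling[of "1/\<beta>"] by linarith
  hence c1: "\<lceil>1/\<beta>\<rceil> \<ge> 1" by simp
  have "real (pp \<beta>) = real_of_int (\<lceil>1/\<beta>\<rceil> - 1)" using c1 by (simp add: pp_def)
  also have "\<dots> \<ge> 1/\<beta> - 1" using le_of_int_ceiling[of "1/\<beta>"] by simp
  finally have "real (pp \<beta>) + 1 \<ge> 1/\<beta>" by simp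
  hence "(real (pp \<beta>) + 1) * \<beta> \<ge> (1/\<beta>) * \<beta>" using assms by (intro mult_right_mono) auto
  thus ?thesis using assms by simp
qed

context cg begin

lemma clique_minus: "is_clique V E S \<Longrightarrow> is_clique V E (S - {v})"
  by (auto simp: is_clique_def)

lemma key_graph:
  assumes S: "S \<in> cliques V E m" and m2: "2 \<le> m" and mp: "m \<le> pp \<beta> + 1"
  shows "(\<Sum>v\<in>S. Dminus V E \<beta> (S-{v})) \<ge> (real m - 2) * Dminus V E \<beta> S + 2 - real m * \<beta>"
proof -
  have cl: "is_clique V E S" "finite S" "card S = m" using S by (auto simp: cliques_def)
  have SV: "S \<subseteq> V" using cl by (simp add: is_clique_def)
  define n where "n = real (card V)"
  have n0: "n > 0" using npos n_def by simp
  define x where "x v = real (card (NN (S-{v}))) / n" for v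
  define D where "D = real (card (NN S)) / n"
  define c where "c = (real (pp \<beta>) - real m + 1) * \<beta>"
  have DmS: "Dminus V E \<beta> S = min D c"
    using cl by (simp add: Dminus_def cD_def cdeg_eq D_def c_def n_def)
  have Dmv: "Dminus V E \<beta> (S-{v}) = min (x v) (c + \<beta>)" if "v \<in> S" for v
  proof -
    have "card (S-{v}) = m - 1" using cl that by simp
    hence "real (card (S-{v})) = real m - 1" using m2 by simp
    hence e: "(real (pp \<beta>) - real (card (S-{v})) + 1) * \<beta> = c + \<beta>" unfolding c_def by (simp only:) (simp add: algebra_simps)
    show ?thesis unfolding Dminus_def e using cl clique_minus[OF cl(1)]
      by (simp add: cD_def cdeg_eq x_def n_def)
  qed
  have cge: "c \<ge> 1 - real m * \<beta>" using pp_ge[OF beta(1)] by (simp add: c_def algebra_simps)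
  have H: "(\<Sum>v\<in>S-K. x v) \<ge> 2 + (real (card (S-K)) - 2) * D - (real m + real (card K)) * \<beta>"
    if K: "K \<subseteq> S" for K
  proof -
    have finK: "finite K" using K cl finite_subset by blast
    define l where "l = real (card (S-K))"
    define k where "k = real (card K)"
    have lk: "l + k = real m" using card_Diff_subset[OF finK K] card_mono[OF cl(2) K] cl
      by (simp add: l_def k_def of_nat_diff)
    define d where "d = real (card (NN S))"
    define Y where "Y = real (\<Sum>v\<in>S-K. card (NN (S-{v})))"
    define A where "A = real (\<Sum>v\<in>S. card (nn v))"
    define B where "B = real (\<Sum>v\<in>K. card (nn v))"
    define R where "R = real (card (V - (S \<union> NN S)))"
    have cnt: "Y + A + B \<ge> 2 * R + l * (d + 1)"
      using count[OF cl(1) cl(2) K] unfolding Y_def A_def B_def R_def l_def d_def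
      by (metis (mono_tags, lifting) of_nat_add of_nat_le_iff of_nat_mult of_nat_numeral of_nat_1)
    have Ab: "A \<le> real m * (\<beta> * n - 1)"
    proof -
      have "A = (\<Sum>v\<in>S. real (card (nn v)))" by (simp add: A_def)
      also have "\<dots> \<le> (\<Sum>v\<in>S. \<beta> * n - 1)" using SV by (intro sum_mono) (auto simp: n_def intro!: nn_bound)
      finally show ?thesis using cl by simp
    qed
    have Bb: "B \<le> k * (\<beta> * n - 1)"
    proof -
      have "B = (\<Sum>v\<in>K. real (card (nn v)))" by (simp add: B_def)
      also have "\<dots> \<le> (\<Sum>v\<in>K. \<beta> * n - 1)" using SV K by (intro sum_mono) (auto simp: n_def intro!: nn_bound)
      finally show ?thesis by (simp add: k_def)
    qed
    have Rv: "R = n - real m - d"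
    proof -
      have "card (S \<union> NN S) = m + card (NN S)"
        using cl finV NN_sub by (subst card_Un_disjoint) (auto simp: NN_def intro: finite_subset)
      moreover have sub: "S \<union> NN S \<subseteq> V" using SV NN_sub by auto
      moreover have "card (S \<union> NN S) \<le> card V" using card_mono[OF finV sub] .
      moreover have "card (V - (S \<union> NN S)) = card V - card (S \<union> NN S)"
        using card_Diff_subset[of "S \<union> NN S" V] finV sub finite_subset by blast
      ultimately show ?thesis by (simp add: R_def n_def d_def of_nat_diff)
    qed
    have "Y \<ge> 2 * n + (l - 2) * d - (real m + k) * \<beta> * n"
    proof -
      have "Y \<ge> 2 * R + l * (d + 1) - A - B" using cnt by simp
      moreover have "2 * R + l * (d + 1) - A - B \<ge> 2 * (n - real m - d) + l * (d + 1) - real m * (\<beta> * n - 1) - k * (\<beta> * n - 1)"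
        using Ab Bb Rv by simp
      moreover have "2 * (n - real m - d) + l * (d + 1) - real m * (\<beta> * n - 1) - k * (\<beta> * n - 1)
          = 2 * n + (l - 2) * d - (real m + k) * \<beta> * n + (l + k - real m)"
        by (simp add: algebra_simps)
      ultimately show ?thesis using lk by simp
    qed
    moreover have "(\<Sum>v\<in>S-K. x v) = Y / n"
      by (simp add: x_def Y_def sum_divide_distrib)
    ultimately have "(\<Sum>v\<in>S-K. x v) \<ge> (2 * n + (l - 2) * d - (real m + k) * \<beta> * n) / n"
      using n0 by (simp add: divide_right_mono)
    also have "(2 * n + (l - 2) * d - (real m + k) * \<beta> * n) / n = 2 + (l - 2) * D - (real m + k) * \<beta>"
      using n0 by (simp add: D_def d_def field_simps)
    finally show ?thesis by (simp add: l_def k_def)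
  qed
  have L: "x u \<ge> 1 - (real m - 1) * \<beta>" if u: "u \<in> S" for u
  proof -
    have "card (S-{u}) = m - 1" using cl u by simp
    hence cu: "real (card (S-{u})) = real m - 1" using m2 by simp
    have "real (card (NN (S-{u}))) \<ge> n - (real m - 1) * \<beta> * n"
      using NN_lower[OF clique_minus[OF cl(1)], of u] cl cu by (simp add: n_def)
    hence "x u \<ge> (n - (real m - 1) * \<beta> * n) / n" unfolding x_def using n0 by (simp add: divide_right_mono)
    also have "(n - (real m - 1) * \<beta> * n) / n = 1 - (real m - 1) * \<beta>" using n0 by (simp add: field_simps)
    finally show ?thesis .
  qed
  have "(\<Sum>v\<in>S. min (x v) (c + \<beta>)) \<ge> (real m - 2) * min D c + 2 - real m * \<beta>"
    by (rule key_abstract[OF cl(2) cl(3) cge H L])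
  moreover have "(\<Sum>v\<in>S. Dminus V E \<beta> (S-{v})) = (\<Sum>v\<in>S. min (x v) (c + \<beta>))"
    by (intro sum.cong) (auto simp: Dmv)
  ultimately show ?thesis using DmS by simp
qed

end



context cg begin

lemma cliques_in_eq:
  assumes S: "S \<in> cliques V E (Suc s)"
  shows "cliques_in V E s S = (\<lambda>v. S - {v}) ` S"
proof (intro set_eqI iffI)
  have cl: "is_clique V E S" "finite S" "card S = Suc s" using S by (auto simp: cliques_def)
  fix U
  { assume "U \<in> cliques_in V E s S"
    hence U: "U \<subseteq> S" "card U = s" "finite U" by (auto simp: cliques_in_def cliques_def)
    hence "card (S - U) = 1" using cl by (simp add: card_Diff_subset)
    then obtain v where v: "S - U = {v}" by (auto simp: card_Suc_eq)
    hence "U = S - {v}" "v \<in> S" using U by auto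
    thus "U \<in> (\<lambda>v. S - {v}) ` S" by auto }
  { assume "U \<in> (\<lambda>v. S - {v}) ` S"
    then obtain v where v: "v \<in> S" "U = S - {v}" by auto
    thus "U \<in> cliques_in V E s S" using cl clique_minus[OF cl(1), of v]
      by (auto simp: cliques_in_def cliques_def) }
qed

lemma phi_ind:
  assumes t2: "2 \<le> t"
  shows "S \<in> cliques V E (t+k) \<Longrightarrow> t + k \<le> pp \<beta> + 1 \<Longrightarrow>
    phi_aux V E \<beta> t k S \<ge> (1 - real t * \<beta>) * (fact (t+k) / fact t)
       + (Dminus V E \<beta> S - (1 - real (t+k) * \<beta>)) * (fact (t+k-2) / fact (t-2))"
proof (induction k arbitrary: S)
  case 0
  thus ?case by simp
next
  case (Suc k)
  define s where "s = t + k"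
  have s2: "2 \<le> s" using t2 by (simp add: s_def)
  have S: "S \<in> cliques V E (Suc s)" using Suc.prems by (simp add: s_def)
  have cl: "is_clique V E S" "finite S" "card S = Suc s" using S by (auto simp: cliques_def)
  define A where "A = (1 - real t * \<beta>) * (fact s / fact t)"
  define B where "B = (fact (s-2) / fact (t-2) :: real)"
  have B0: "B \<ge> 0" by (simp add: B_def)
  have inj: "inj_on (\<lambda>v. S - {v}) S" by (auto simp: inj_on_def)
  have "phi_aux V E \<beta> t (Suc k) S = (\<Sum>v\<in>S. phi_aux V E \<beta> t k (S - {v}))"
    using cliques_in_eq[OF S] by (simp add: s_def sum.reindex[OF inj])
  also have "\<dots> \<ge> (\<Sum>v\<in>S. A + (Dminus V E \<beta> (S-{v}) - (1 - real s * \<beta>)) * B)"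
  proof (intro sum_mono)
    fix v assume v: "v \<in> S"
    have "S - {v} \<in> cliques V E (t + k)"
      using cl v clique_minus[OF cl(1), of v] by (auto simp: cliques_def s_def)
    from Suc.IH[OF this] show "A + (Dminus V E \<beta> (S-{v}) - (1 - real s * \<beta>)) * B \<le> phi_aux V E \<beta> t k (S - {v})"
      using Suc.prems(2) by (simp add: A_def B_def s_def)
  qed
  finally have ch: "phi_aux V E \<beta> t (Suc k) S \<ge> (\<Sum>v\<in>S. A + (Dminus V E \<beta> (S-{v}) - (1 - real s * \<beta>)) * B)" .
  have eqsum: "(\<Sum>v\<in>S. A + (Dminus V E \<beta> (S-{v}) - (1 - real s * \<beta>)) * B)
     = real (Suc s) * A + B * ((\<Sum>v\<in>S. Dminus V E \<beta> (S-{v})) - real (Suc s) * (1 - real s * \<beta>))"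
    using cl by (simp add: sum.distrib sum_distrib_left sum_distrib_right sum_subtractf algebra_simps)
  have lo: "phi_aux V E \<beta> t (Suc k) S \<ge> real (Suc s) * A + B * ((\<Sum>v\<in>S. Dminus V E \<beta> (S-{v})) - real (Suc s) * (1 - real s * \<beta>))"
    using ch eqsum by linarith
  have kg: "(\<Sum>v\<in>S. Dminus V E \<beta> (S-{v})) \<ge> (real (Suc s) - 2) * Dminus V E \<beta> S + 2 - real (Suc s) * \<beta>"
    by (rule key_graph[OF S]) (use s2 Suc.prems(2) in \<open>auto simp: s_def\<close>)
  have Q: "(\<Sum>v\<in>S. Dminus V E \<beta> (S-{v})) - real (Suc s) * (1 - real s * \<beta>)
      \<ge> (real s - 1) * (Dminus V E \<beta> S - (1 - real (Suc s) * \<beta>))"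
  proof -
    have "(real (Suc s) - 2) * Dminus V E \<beta> S + 2 - real (Suc s) * \<beta> - real (Suc s) * (1 - real s * \<beta>)
        = (real s - 1) * (Dminus V E \<beta> S - (1 - real (Suc s) * \<beta>))"
      by (simp add: algebra_simps)
    thus ?thesis using kg by linarith
  qed
  have f1: "fact (Suc s) = real (Suc s) * fact s" by simp
  have f2: "(fact (Suc s - 2) :: real) = (real s - 1) * fact (s - 2)"
  proof -
    have "Suc s - 2 = Suc (s - 2)" using s2 by simp
    hence "(fact (Suc s - 2) :: real) = real (Suc (s-2)) * fact (s-2)" by simp
    moreover have "real (Suc (s-2)) = real s - 1" using s2 by (simp add: of_nat_diff)
    ultimately show ?thesis by simp
  qed
  have "B * ((\<Sum>v\<in>S. Dminus V E \<beta> (S-{v})) - real (Suc s) * (1 - real s * \<beta>))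
      \<ge> B * ((real s - 1) * (Dminus V E \<beta> S - (1 - real (Suc s) * \<beta>)))"
    by (rule mult_left_mono[OF Q B0])
  moreover have "(1 - real t * \<beta>) * (fact (t + Suc k) / fact t) = real (Suc s) * A"
    by (simp add: A_def s_def f1[unfolded s_def])
  moreover have "(fact (t + Suc k - 2) / fact (t - 2) :: real) = (real s - 1) * B"
    using f2 by (simp add: B_def s_def)
  moreover have "real (t + Suc k) = real (Suc s)" by (simp add: s_def)
  ultimately show ?case using lo by (simp only:) (simp add: algebra_simps del: phi_aux.simps)
qed

end



theorem mainTheorem17:
  fixes V :: "'a set" and E :: "'a \<Rightarrow> 'a \<Rightarrow> bool" and \<beta> :: real
  assumes graph: "simple_graph V E"
    and nonempty: "V \<noteq> {}"
    and beta: "0 < \<beta>" "\<beta> < 1"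
    and mindeg: "real (min_degree V E) = (1 - \<beta>) * real (card V)"
  shows "(\<forall>t s S. 2 \<le> t \<and> t < s \<and> s \<le> pp \<beta> + 1 \<and> S \<in> cliques V E s \<longrightarrow>
            Phi V E \<beta> t s S \<ge> (1 - real t * \<beta>) * (fact s / fact t)
              + (Dminus V E \<beta> S - (1 - real s * \<beta>)) * (fact (s - 2) / fact (t - 2)))
       \<and> (\<forall>t. 2 \<le> t \<and> t \<le> pp \<beta> \<longrightarrow>
            (\<Sum>S\<in>cliques V E (pp \<beta> + 1). Phi V E \<beta> t (pp \<beta> + 1) S)
              \<ge> ((1 - real t * \<beta>) * (fact (pp \<beta> + 1) / fact t)
                  - (1 - (real (pp \<beta>) + 1) * \<beta>) * (fact (pp \<beta> - 1) / fact (t - 2)))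
                * real (card (cliques V E (pp \<beta> + 1))))"
proof -
  interpret cg V E \<beta> using assms by unfold_locales auto
  have P1: "Phi V E \<beta> t s S \<ge> (1 - real t * \<beta>) * (fact s / fact t)
              + (Dminus V E \<beta> S - (1 - real s * \<beta>)) * (fact (s - 2) / fact (t - 2))"
    if h: "2 \<le> t" "t < s" "s \<le> pp \<beta> + 1" "S \<in> cliques V E s" for t s S
  proof -
    have ts: "t + (s - t) = s" using h by simp
    have a: "phi V E \<beta> t s S \<ge> (1 - real t * \<beta>) * (fact s / fact t)
              + (Dminus V E \<beta> S - (1 - real s * \<beta>)) * (fact (s - 2) / fact (t - 2))"
      using phi_ind[OF h(1), of S "s - t"] h unfolding phi_def ts by simp
    have "Dminus V E \<beta> S \<le> (real (pp \<beta>) - real s + 1) * \<beta>"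
      using h(4) by (simp add: Dminus_def cliques_def)
    hence "Dminus V E \<beta> S - (1 - real s * \<beta>) \<le> (real (pp \<beta>) + 1) * \<beta> - 1"
      by (simp add: algebra_simps)
    hence "(Dminus V E \<beta> S - (1 - real s * \<beta>)) * (fact (s - 2) / fact (t - 2))
        \<le> ((real (pp \<beta>) + 1) * \<beta> - 1) * (fact (s - 2) / fact (t - 2))"
      by (intro mult_right_mono) auto
    hence b: "varphi \<beta> t s \<ge> (1 - real t * \<beta>) * (fact s / fact t)
              + (Dminus V E \<beta> S - (1 - real s * \<beta>)) * (fact (s - 2) / fact (t - 2))"
      by (simp add: varphi_def)
    show ?thesis using a b by (simp add: Phi_def)
  qed
  show ?thesis
  proof (intro conjI allI impI)
    fix t s S
    assume "2 \<le> t \<and> t < s \<and> s \<le> pp \<beta> + 1 \<and> S \<in> cliques V E s"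
    thus "Phi V E \<beta> t s S \<ge> (1 - real t * \<beta>) * (fact s / fact t)
              + (Dminus V E \<beta> S - (1 - real s * \<beta>)) * (fact (s - 2) / fact (t - 2))"
      using P1 by blast
  next
    fix t assume t: "2 \<le> t \<and> t \<le> pp \<beta>"
    let ?c = "(1 - real t * \<beta>) * (fact (pp \<beta> + 1) / fact t)
                  - (1 - (real (pp \<beta>) + 1) * \<beta>) * (fact (pp \<beta> - 1) / fact (t - 2))"
    have "Phi V E \<beta> t (pp \<beta> + 1) S \<ge> ?c" if S: "S \<in> cliques V E (pp \<beta> + 1)" for S
    proof -
      have D0: "Dminus V E \<beta> S = 0"
      proof -
        have "cD V E S \<ge> 0" by (simp add: cD_def)
        thus ?thesis using S by (simp add: Dminus_def cliques_def min_def)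
      qed
      have e: "pp \<beta> + 1 - 2 = pp \<beta> - 1" by simp
      have "Phi V E \<beta> t (pp \<beta> + 1) S \<ge> (1 - real t * \<beta>) * (fact (pp \<beta> + 1) / fact t)
              + (0 - (1 - real (pp \<beta> + 1) * \<beta>)) * (fact (pp \<beta> - 1) / fact (t - 2))"
        using P1[of t "pp \<beta> + 1" S] t S D0 unfolding e by (simp del: of_nat_Suc fact_Suc)
      moreover have "real (pp \<beta> + 1) = real (pp \<beta>) + 1" by simp
      moreover have neg: "\<And>a b::real. (0 - a) * b = - (a * b)" by simp
      ultimately show ?thesis by (simp only: neg)
    qed
    hence "(\<Sum>S\<in>cliques V E (pp \<beta> + 1). Phi V E \<beta> t (pp \<beta> + 1) S) \<ge> (\<Sum>S\<in>cliques V E (pp \<beta> + 1). ?c)"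
      by (intro sum_mono) auto
    thus "(\<Sum>S\<in>cliques V E (pp \<beta> + 1). Phi V E \<beta> t (pp \<beta> + 1) S) \<ge> ?c * real (card (cliques V E (pp \<beta> + 1)))"
      by (simp add: mult.commute)
  qed
qed


end
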